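(* Let $p$ be a prime and let $G$ be a finite Abelian $p$-group. Let $S$ be a sequence over $G$ with $|S|=\mathsf{D}(G)+i-1$, where $i\in\{1,2,\dots,p\}$, and let $\mathcal{A}$ be any subset of $\{1,2,\dots,p-1\}$ with exactly $i-1$ elements. Then $S$ contains a non-empty zero-sum subsequence $S'$ such that $|S'|\not\equiv b \pmod p$ for all $b\in\mathcal{A}$.
   Context: A sequence over a finite Abelian group $G$ (written additively) is a finite multiset of elements of $G$; its length $|S|$ is the number of terms counted with multiplicity, and a subsequence is a sub-multiset. A zero-sum sequence is one whose terms sum to $0$. The Davenport constant $\mathsf{D}(G)$ is the smallest positive integer $t$ such that every sequence over $G$ of length at least $t$ contains a non-empty zero-sum subsequence. *)

theory Defs
  imports Main "HOL-Library.Multiset" "HOL-Number_Theory.Cong"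
begin

text \<open>Sequences over an abelian group are finite multisets. A zero-sum subsequence
of S is a sub-multiset T of S with sum_mset T = 0.\<close>

definition has_nonempty_zero_sum_subseq :: "'a::comm_monoid_add multiset \<Rightarrow> bool" where
  "has_nonempty_zero_sum_subseq S \<longleftrightarrow> (\<exists>T. T \<subseteq># S \<and> T \<noteq> {#} \<and> sum_mset T = 0)"

definition davenport :: "'a::comm_monoid_add itself \<Rightarrow> nat" where
  "davenport _ = (LEAST t. t > 0 \<and>
     (\<forall>S :: 'a multiset. size S \<ge> t \<longrightarrow> has_nonempty_zero_sum_subseq S))"

end

theory Submission
  imports Defs "HOL-Library.Poly_Mapping" "HOL-Library.FuncSet"
begin



primrec nm :: "nat \<Rightarrow> 'a::ab_group_add \<Rightarrow> 'a" where
  "nm 0 g = 0" | "nm (Suc n) g = g + nm n g"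

lemma nm_add: "nm (m + n) g = nm m g + nm n g"
  by (induction m) (auto simp: add.assoc)

lemma nm_mult: "nm (m * n) g = nm m (nm n g)"
  by (induction m) (auto simp: nm_add)

lemma nm_plus: "nm n (g + h) = nm n g + nm n h"
  by (induction n) (auto simp: algebra_simps)

lemma nm_zero[simp]: "nm n 0 = 0"
  by (induction n) auto

lemma nm_one[simp]: "nm 1 g = g"
  by simp

lemma nm_uminus: "nm n (- g) = - nm n g"
  by (induction n) auto

lemma nm_diff: "nm n (g - h) = nm n g - nm n h"
  by (metis diff_conv_add_uminus nm_plus nm_uminus)

lemma sum_const_nm: "finite A \<Longrightarrow> (\<Sum>x\<in>A. g) = nm (card A) g"
  by (induction A rule: finite_induct) auto

lemma nm_sum: "nm n (sum f A) = (\<Sum>x\<in>A. nm n (f x))"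
  by (induction A rule: infinite_finite_induct) (auto simp: nm_plus)

lemma nm_card_zero:
  fixes g :: "'a::{finite,ab_group_add}"
  shows "nm (card (UNIV :: 'a set)) g = 0"
proof -
  have "(\<Sum>x\<in>(UNIV::'a set). x + g) = (\<Sum>x\<in>(UNIV::'a set). x)"
    by (rule sum.reindex_bij_witness[of _ "\<lambda>x. x - g" "\<lambda>x. x + g"]) auto
  then show ?thesis by (simp add: sum.distrib sum_const_nm)
qed

definition sg :: "'a::ab_group_add set \<Rightarrow> bool" where
  "sg K \<longleftrightarrow> 0 \<in> K \<and> (\<forall>x\<in>K. \<forall>y\<in>K. x + y \<in> K)"

lemma sg_nm: "sg K \<Longrightarrow> x \<in> K \<Longrightarrow> nm n x \<in> K"
  by (induction n) (auto simp: sg_def)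

lemma sg_uminus:
  fixes K :: "'a::{finite,ab_group_add} set"
  assumes "sg K" "x \<in> K" shows "- x \<in> K"
proof -
  let ?N = "card (UNIV :: 'a set)"
  have "?N > 0" by (simp add: finite_UNIV_card_ge_0)
  then have "nm ?N x = x + nm (?N - 1) x"
    by (metis Suc_diff_1 nm.simps(2))
  then have "- x = nm (?N - 1) x" using nm_card_zero[of x]
    by (metis add.commute add_eq_0_iff)
  then show ?thesis using sg_nm assms by metis
qed

lemma sg_add: "sg K \<Longrightarrow> x \<in> K \<Longrightarrow> y \<in> K \<Longrightarrow> x + y \<in> K"
  by (auto simp: sg_def)

lemma sg_zero: "sg K \<Longrightarrow> 0 \<in> K"
  by (auto simp: sg_def)

lemma sg_diff:
  fixes K :: "'a::{finite,ab_group_add} set"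
  shows "sg K \<Longrightarrow> x \<in> K \<Longrightarrow> y \<in> K \<Longrightarrow> x - y \<in> K"
  by (metis diff_conv_add_uminus sg_add sg_uminus)

lemma sg_sum: "sg K \<Longrightarrow> (\<And>j. j \<in> J \<Longrightarrow> f j \<in> K) \<Longrightarrow> sum f J \<in> K"
  by (induction J rule: infinite_finite_induct) (auto simp: sg_def)

definition ordr :: "'a::ab_group_add \<Rightarrow> nat" where
  "ordr g = (LEAST n. 0 < n \<and> nm n g = 0)"

lemma ordr_prop:
  fixes g :: "'a::{finite,ab_group_add}"
  shows "0 < ordr g \<and> nm (ordr g) g = 0"
  unfolding ordr_def
  by (rule LeastI[of _ "card (UNIV::'a set)"]) (simp add: nm_card_zero finite_UNIV_card_ge_0)

lemma nm_eq_0_iff: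
  fixes g :: "'a::{finite,ab_group_add}"
  shows "nm n g = 0 \<longleftrightarrow> ordr g dvd n"
proof
  assume "ordr g dvd n"
  then obtain c where "n = ordr g * c" by auto
  then show "nm n g = 0" using ordr_prop[of g] by (simp add: mult.commute nm_mult)
next
  assume h: "nm n g = 0"
  let ?o = "ordr g"
  have "n = (n div ?o) * ?o + n mod ?o" by simp
  then have "nm n g = nm (n div ?o) (nm ?o g) + nm (n mod ?o) g"
    by (metis nm_add nm_mult)
  then have "nm (n mod ?o) g = 0" using h ordr_prop[of g] by simp
  moreover have "n mod ?o < ?o" using ordr_prop[of g] by simp
  ultimately have "n mod ?o = 0"
    using not_less_Least[of "n mod ?o" "\<lambda>n. 0 < n \<and> nm n g = 0"] unfolding ordr_def
    by auto
  then show "ordr g dvd n" by auto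
qed

lemma ordr_ppow:
  fixes g :: "'a::{finite,ab_group_add}"
  assumes "prime p" "card (UNIV :: 'a set) = p ^ k"
  shows "\<exists>b. ordr g = p ^ b"
proof -
  have "ordr g dvd p ^ k" using nm_card_zero[of g] assms(2) nm_eq_0_iff by metis
  then show ?thesis using assms(1) by (auto simp: divides_primepow_nat)
qed




definition basis_of :: "nat \<Rightarrow> 'a::ab_group_add set \<Rightarrow> nat \<Rightarrow> (nat \<Rightarrow> 'a) \<Rightarrow> (nat \<Rightarrow> nat) \<Rightarrow> bool" where
  "basis_of p H r e q \<longleftrightarrow>
     (\<forall>j<r. e j \<in> H \<and> (\<exists>a. q j = p ^ a) \<and> nm (q j) (e j) = 0) \<and>
     (\<forall>h\<in>H. \<exists>c. h = (\<Sum>j<r. nm (c j) (e j))) \<and>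
     (\<forall>c. (\<forall>j<r. c j < q j) \<longrightarrow> (\<Sum>j<r. nm (c j) (e j)) = 0 \<longrightarrow> (\<forall>j<r. c j = 0))"

lemma key_step:
  fixes H :: "'a::{finite,ab_group_add} set"
  assumes p: "prime p" and card: "card (UNIV :: 'a set) = p ^ k"
    and H: "sg H" and eH: "e \<in> H" and ea: "ordr e = p ^ a" and a: "a \<ge> 1"
    and kill: "\<forall>h\<in>H. nm (p ^ a) h = 0"
    and K: "K \<subseteq> H" "sg K" "K \<inter> range (\<lambda>t. nm t e) = {0}"
    and Kmax: "\<forall>K'. K' \<subseteq> H \<and> sg K' \<and> K' \<inter> range (\<lambda>t. nm t e) = {0} \<longrightarrow> card K' \<le> card K"
    and h: "h \<in> H"
  shows "\<exists>t k. k \<in> K \<and> h = nm t e + k"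
proof (rule ccontr)
  assume nh: "\<not> (\<exists>t k. k \<in> K \<and> h = nm t e + k)"
  define C where "C = range (\<lambda>t. nm t e)"
  define CK where "CK = {x. \<exists>t k. k \<in> K \<and> x = nm t e + k}"
  have p1: "p > 1" using p prime_gt_1_nat by blast
  have sgCK: "sg CK"
    unfolding sg_def CK_def
  proof (intro conjI ballI)
    show "0 \<in> {x. \<exists>t k. k \<in> K \<and> x = nm t e + k}"
      using sg_zero[OF K(2)] by (auto intro!: exI[of _ 0])
  next
    fix x y assume "x \<in> {x. \<exists>t k. k \<in> K \<and> x = nm t e + k}" "y \<in> {x. \<exists>t k. k \<in> K \<and> x = nm t e + k}"
    then obtain t1 k1 t2 k2 where "k1 \<in> K" "k2 \<in> K" "x = nm t1 e + k1" "y = nm t2 e + k2" by auto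
    then show "x + y \<in> {x. \<exists>t k. k \<in> K \<and> x = nm t e + k}"
    proof (intro CollectI exI conjI)
      show "k1 + k2 \<in> K" using sg_add[OF K(2)] \<open>k1 \<in> K\<close> \<open>k2 \<in> K\<close> by blast
      show "x + y = nm (t1 + t2) e + (k1 + k2)" using \<open>x = nm t1 e + k1\<close> \<open>y = nm t2 e + k2\<close>
        by (simp add: nm_add algebra_simps)
    qed
  qed
  have KCK: "K \<subseteq> CK"
  proof
    fix x assume "x \<in> K" then show "x \<in> CK" unfolding CK_def
      by (intro CollectI exI[of _ 0] exI[of _ x]) simp
  qed
  have CCK: "nm t e \<in> CK" for t unfolding CK_def
    using sg_zero[OF K(2)] by (intro CollectI exI[of _ t] exI[of _ 0]) simp
  have hCK: "h \<notin> CK" using nh unfolding CK_def by auto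
  have "nm (p ^ k) h \<in> CK" using nm_card_zero[of h] card sg_zero[OF sgCK] by simp
  define j where "j = (LEAST j. nm (p ^ j) h \<in> CK)"
  have j1: "nm (p ^ j) h \<in> CK" unfolding j_def by (rule LeastI) fact
  have "j \<noteq> 0"
  proof
    assume "j = 0" then show False using j1 hCK by simp
  qed
  then obtain j' where jj: "j = Suc j'" using not0_implies_Suc by blast
  define h1 where "h1 = nm (p ^ j') h"
  have h1CK: "h1 \<notin> CK" unfolding h1_def using not_less_Least[of j' "\<lambda>j. nm (p ^ j) h \<in> CK"]
    by (simp add: j_def[symmetric] jj)
  have h1H: "h1 \<in> H" unfolding h1_def by (rule sg_nm[OF H h])
  have "nm p h1 \<in> CK" using j1 unfolding h1_def jj by (simp add: nm_mult)
  then obtain m k0 where k0: "k0 \<in> K" and pm: "nm p h1 = nm m e + k0" unfolding CK_def by auto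
  have pa: "p ^ (a - 1) * p = p ^ a" using a by (cases a) (auto simp: power_Suc2)
  have "nm (p ^ (a - 1)) (nm p h1) = nm (p ^ a) h1"
    by (simp only: nm_mult[symmetric] pa)
  also have "\<dots> = 0" using kill h1H by auto
  finally have "nm (p ^ (a - 1) * m) e + nm (p ^ (a - 1)) k0 = 0"
    by (simp add: pm nm_plus nm_mult)
  then have "nm (p ^ (a - 1) * m) e = - nm (p ^ (a - 1)) k0"
    by (simp add: eq_neg_iff_add_eq_0)
  moreover have "- nm (p ^ (a - 1)) k0 \<in> K" using sg_uminus[OF K(2) sg_nm[OF K(2) k0]] .
  ultimately have "nm (p ^ (a - 1) * m) e \<in> K" by simp
  moreover have "nm (p ^ (a - 1) * m) e \<in> range (\<lambda>t. nm t e)" by (rule rangeI)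
  ultimately have "nm (p ^ (a - 1) * m) e \<in> K \<inter> range (\<lambda>t. nm t e)" by blast
  then have "nm (p ^ (a - 1) * m) e = 0" using K(3) by simp
  then have "p ^ a dvd p ^ (a - 1) * m" using ea nm_eq_0_iff[of "p ^ (a - 1) * m" e] by simp
  then have "p ^ (a - 1) * p dvd p ^ (a - 1) * m"
    by (simp only: pa)
  then have "p dvd m" using p1 by (simp add: dvd_mult_cancel_left)
  then obtain m' where m': "m = p * m'" by auto
  define h2 where "h2 = h1 - nm m' e"
  have h2H: "h2 \<in> H" unfolding h2_def
    using sg_diff[OF H h1H sg_nm[OF H eH]] .
  have ph2: "nm p h2 = k0" unfolding h2_def
    by (simp add: nm_diff pm m' nm_mult[symmetric])
  have h2CK: "h2 \<notin> CK"
  proof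
    assume "h2 \<in> CK"
    then have "h2 + nm m' e \<in> CK" using sg_add[OF sgCK _ CCK] by blast
    then show False using h1CK unfolding h2_def by simp
  qed
  define K' where "K' = {x. \<exists>k s. k \<in> K \<and> x = k + nm s h2}"
  have K'H: "K' \<subseteq> H"
  proof
    fix x assume "x \<in> K'"
    then obtain kk s where "kk \<in> K" "x = kk + nm s h2" unfolding K'_def by auto
    then show "x \<in> H" using K(1) sg_add[OF H _ sg_nm[OF H h2H]] by auto
  qed
  have sgK': "sg K'"
    unfolding sg_def K'_def
  proof (intro conjI ballI)
    show "0 \<in> {x. \<exists>k s. k \<in> K \<and> x = k + nm s h2}"
      using sg_zero[OF K(2)] by (auto intro!: exI[of _ 0])
  next
    fix x y assume "x \<in> {x. \<exists>k s. k \<in> K \<and> x = k + nm s h2}" "y \<in> {x. \<exists>k s. k \<in> K \<and> x = k + nm s h2}"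
    then obtain t1 k1 t2 k2 where "k1 \<in> K" "k2 \<in> K" "x = k1 + nm t1 h2" "y = k2 + nm t2 h2" by auto
    then show "x + y \<in> {x. \<exists>k s. k \<in> K \<and> x = k + nm s h2}"
    proof (intro CollectI exI conjI)
      show "k1 + k2 \<in> K" using sg_add[OF K(2)] \<open>k1 \<in> K\<close> \<open>k2 \<in> K\<close> by blast
      show "x + y = (k1 + k2) + nm (t1 + t2) h2" using \<open>x = k1 + nm t1 h2\<close> \<open>y = k2 + nm t2 h2\<close>
        by (simp add: nm_add algebra_simps)
    qed
  qed
  have KK': "K \<subseteq> K'"
  proof
    fix x assume "x \<in> K" then show "x \<in> K'" unfolding K'_def
      by (intro CollectI exI[of _ x] exI[of _ 0]) simp
  qed
  have h2K': "h2 \<in> K'" unfolding K'_def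
    using sg_zero[OF K(2)] by (intro CollectI exI[of _ 0] exI[of _ 1]) simp
  have h2K: "h2 \<notin> K" using h2CK KCK by auto
  have cardlt: "card K < card K'"
    by (rule psubset_card_mono) (use KK' h2K' h2K in auto)
  have "K' \<inter> C = {0}"
  proof (intro equalityI subsetI)
    fix x assume "x \<in> {0::'a}"
    then show "x \<in> K' \<inter> C" using sg_zero[OF sgK'] by (auto simp: C_def intro: range_eqI[of _ _ 0])
  next
    fix x assume x: "x \<in> K' \<inter> C"
    then obtain kk s t where kk: "kk \<in> K" and xs: "x = kk + nm s h2" and xt: "x = nm t e"
      unfolding K'_def C_def by auto
    define u where "u = s div p"
    define r where "r = s mod p"
    have "s = r + u * p" by (simp add: r_def u_def)
    then have "nm s h2 = nm (r + u * p) h2" by simp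
    also have "\<dots> = nm r h2 + nm u (nm p h2)" by (simp only: nm_add nm_mult)
    finally have ns: "nm s h2 = nm r h2 + nm u k0" by (simp add: ph2)
    have ku: "nm u k0 \<in> K" by (rule sg_nm[OF K(2) k0])
    show "x \<in> {0}"
    proof (cases "r = 0")
      case True
      then have "x \<in> K" using xs ns sg_add[OF K(2) kk ku] by simp
      then show ?thesis using xt K(3) by (auto simp: C_def)
    next
      case False
      have rp: "r < p" using p1 by (simp add: r_def)
      have "coprime r p"
      proof -
        have "\<not> p dvd r" using False rp by (auto dest: dvd_imp_le)
        then show ?thesis using prime_imp_coprime[OF p] coprime_commute by blast
      qed
      then obtain r' where "[r * r' = 1] (mod p)" using cong_solve_coprime_nat[of r p] by auto
      then have "(r * r') mod p = 1" using p1 by (simp add: cong_def)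
      then have rr: "r' * r = 1 + ((r * r') div p) * p"
        using div_mult_mod_eq[of "r * r'" p] by (simp add: mult.commute)
      have "nm r h2 = nm t e + (- (kk + nm u k0))"
        using xs xt ns by (simp add: algebra_simps)
      moreover have "- (kk + nm u k0) \<in> K" using sg_uminus[OF K(2) sg_add[OF K(2) kk ku]] .
      ultimately have "nm r h2 \<in> CK" unfolding CK_def by blast
      then have "nm r' (nm r h2) \<in> CK" by (rule sg_nm[OF sgCK])
      moreover have "nm r' (nm r h2) = h2 + nm ((r * r') div p) k0"
      proof -
        have "nm r' (nm r h2) = nm (1 + ((r * r') div p) * p) h2" by (simp only: nm_mult[symmetric] rr)
        also have "\<dots> = h2 + nm ((r * r') div p) (nm p h2)" by (simp only: nm_add nm_mult nm_one)
        finally show ?thesis by (simp add: ph2)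
      qed
      ultimately have "h2 + nm ((r * r') div p) k0 \<in> CK" by simp
      then have "h2 + nm ((r * r') div p) k0 - nm ((r * r') div p) k0 \<in> CK"
        using sg_diff[OF sgCK] KCK sg_nm[OF K(2) k0] by blast
      then show ?thesis using h2CK by simp
    qed
  qed
  then have "card K' \<le> card K" using Kmax K'H sgK' by (auto simp: C_def)
  then show False using cardlt by simp
qed




lemma structure_thm:
  fixes H :: "'a::{finite,ab_group_add} set"
  assumes p: "prime p" and card: "card (UNIV :: 'a set) = p ^ k"
  shows "sg H \<Longrightarrow> \<exists>r e q. basis_of p H r e q"
proof (induction "card H" arbitrary: H rule: less_induct)
  case less
  note H = less.prems
  have p1: "p > 1" using p prime_gt_1_nat by blast
  show ?case
  proof (cases "H = {0}")
    case True
    have "basis_of p H 0 (\<lambda>_. 0) (\<lambda>_. 1)" by (simp add: basis_of_def True)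
    then show ?thesis by blast
  next
    case False
    then obtain h0 where h0: "h0 \<in> H" "h0 \<noteq> 0" using sg_zero[OF H] by blast
    have fin: "finite (ordr ` H)" by simp
    define M where "M = Max (ordr ` H)"
    have "M \<in> ordr ` H" unfolding M_def using h0 by (intro Max_in) auto
    then obtain e where eH: "e \<in> H" and eM: "ordr e = M" by auto
    have emax: "ordr h \<le> ordr e" if "h \<in> H" for h
      unfolding eM M_def using that by simp
    obtain a where ea: "ordr e = p ^ a" using ordr_ppow[OF p card] by blast
    have "ordr h0 \<noteq> 1"
    proof
      assume "ordr h0 = 1"
      then have "nm 1 h0 = 0" using nm_eq_0_iff[of 1 h0] by simp
      then show False using h0 by simp
    qed
    then have "ordr h0 > 1" using ordr_prop[of h0] by linarith
    then have "ordr e > 1" using emax[OF h0(1)] by linarith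
    then have a1: "a \<ge> 1" using ea by (cases a) auto
    have e0: "e \<noteq> 0"
    proof
      assume "e = 0"
      then have "ordr e dvd 1" using nm_eq_0_iff[of 1 e] by simp
      then show False using \<open>ordr e > 1\<close> by simp
    qed
    have kill: "\<forall>h\<in>H. nm (p ^ a) h = 0"
    proof
      fix h assume hH: "h \<in> H"
      obtain b where hb: "ordr h = p ^ b" using ordr_ppow[OF p card] by blast
      have "p ^ b \<le> p ^ a" using emax[OF hH] hb ea by simp
      then have "b \<le> a" using power_le_imp_le_exp[OF p1] by blast
      then have "ordr h dvd p ^ a" using hb by (simp add: le_imp_power_dvd)
      then show "nm (p ^ a) h = 0" using nm_eq_0_iff by blast
    qed
    define C where "C = range (\<lambda>t. nm t e)"
    define KS where "KS = {K. K \<subseteq> H \<and> sg K \<and> K \<inter> C = {0}}"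
    have "{0} \<inter> C = {0}" unfolding C_def by (auto intro: range_eqI[of _ _ 0])
    then have "{0} \<in> KS" unfolding KS_def sg_def using sg_zero[OF H] by simp
    moreover have "finite KS" by (rule finite_subset[of _ "Pow H"]) (auto simp: KS_def)
    ultimately obtain K where KKS: "K \<in> KS" and Kmax0: "\<forall>K'\<in>KS. card K' \<le> card K"
    proof -
      have "finite (card ` KS)" "card ` KS \<noteq> {}" using \<open>finite KS\<close> \<open>{0} \<in> KS\<close> by auto
      then have "Max (card ` KS) \<in> card ` KS" by (rule Max_in)
      then obtain K where K1: "K \<in> KS" and K2: "card K = Max (card ` KS)" by auto
      have "\<forall>K'\<in>KS. card K' \<le> card K" using \<open>finite KS\<close> K2 by simp
      then show ?thesis by (rule that[OF K1])
    qed
    have K: "K \<subseteq> H" "sg K" "K \<inter> range (\<lambda>t. nm t e) = {0}" using KKS unfolding KS_def C_def by auto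
    have Kmax: "\<forall>K'. K' \<subseteq> H \<and> sg K' \<and> K' \<inter> range (\<lambda>t. nm t e) = {0} \<longrightarrow> card K' \<le> card K"
      using Kmax0 unfolding KS_def C_def by auto
    have decomp: "\<exists>t k. k \<in> K \<and> h = nm t e + k" if "h \<in> H" for h
      by (rule key_step[OF p card H eH ea a1 kill K Kmax that])
    have eK: "e \<notin> K"
    proof
      assume "e \<in> K"
      moreover have "e \<in> range (\<lambda>t. nm t e)" by (rule range_eqI[of _ _ 1]) simp
      ultimately have "e \<in> K \<inter> range (\<lambda>t. nm t e)" by (rule IntI)
      then show False using K(3) e0 by simp
    qed
    have "card K < card H"
      by (rule psubset_card_mono) (use K(1) eH eK in auto)
    then have "\<exists>r e q. basis_of p K r e q" by (rule less.hyps[OF _ K(2)])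
    then obtain r e' q' where IH: "basis_of p K r e' q'" by blast
    define E where "E = case_nat e e'"
    define Q where "Q = case_nat (p ^ a) q'"
    have sumE: "(\<Sum>j<Suc r. nm (c j) (E j)) = nm (c 0) e + (\<Sum>j<r. nm (c (Suc j)) (e' j))" for c
      unfolding sum.lessThan_Suc_shift by (simp add: E_def)
    have P1: "\<forall>j<Suc r. E j \<in> H \<and> (\<exists>a. Q j = p ^ a) \<and> nm (Q j) (E j) = 0"
    proof (intro allI impI)
      fix j assume j: "j < Suc r"
      show "E j \<in> H \<and> (\<exists>a. Q j = p ^ a) \<and> nm (Q j) (E j) = 0"
      proof (cases j)
        case 0
        then show ?thesis using eH ordr_prop[of e] ea by (auto simp: E_def Q_def)
      next
        case (Suc j')
        have "j' < r" using j Suc by simp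
        then have "e' j' \<in> K \<and> (\<exists>a. q' j' = p ^ a) \<and> nm (q' j') (e' j') = 0"
          using IH unfolding basis_of_def by blast
        then show ?thesis using K(1) Suc by (auto simp: E_def Q_def)
      qed
    qed
    have P2: "\<forall>h\<in>H. \<exists>c. h = (\<Sum>j<Suc r. nm (c j) (E j))"
    proof
      fix h assume "h \<in> H"
      then obtain t kk where kk: "kk \<in> K" "h = nm t e + kk" using decomp by blast
      have "\<forall>h\<in>K. \<exists>c. h = (\<Sum>j<r. nm (c j) (e' j))" using IH unfolding basis_of_def by blast
      then obtain c where "kk = (\<Sum>j<r. nm (c j) (e' j))" using kk(1) by blast
      then have "h = (\<Sum>j<Suc r. nm (case_nat t c j) (E j))"
        using kk(2) unfolding sumE by simp
      then show "\<exists>c. h = (\<Sum>j<Suc r. nm (c j) (E j))" by blast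
    qed
    have P3: "\<forall>c. (\<forall>j<Suc r. c j < Q j) \<longrightarrow> (\<Sum>j<Suc r. nm (c j) (E j)) = 0 \<longrightarrow> (\<forall>j<Suc r. c j = 0)"
    proof (intro allI impI)
      fix c :: "nat \<Rightarrow> nat" and j
      assume cq: "\<forall>j<Suc r. c j < Q j" and s0: "(\<Sum>j<Suc r. nm (c j) (E j)) = 0" and j: "j < Suc r"
      define s where "s = (\<Sum>j<r. nm (c (Suc j)) (e' j))"
      have sK: "s \<in> K" unfolding s_def
      proof (rule sg_sum[OF K(2)])
        fix j assume "j \<in> {..<r}"
        then have "e' j \<in> K" using IH unfolding basis_of_def by blast
        then show "nm (c (Suc j)) (e' j) \<in> K" by (rule sg_nm[OF K(2)])
      qed
      have "nm (c 0) e + s = 0" using s0 unfolding sumE s_def .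
      then have "nm (c 0) e = - s" by (simp add: eq_neg_iff_add_eq_0)
      then have "nm (c 0) e \<in> K" using sg_uminus[OF K(2) sK] by simp
      moreover have "nm (c 0) e \<in> range (\<lambda>t. nm t e)" by (rule rangeI)
      ultimately have "nm (c 0) e \<in> K \<inter> range (\<lambda>t. nm t e)" by (rule IntI)
      then have c0: "nm (c 0) e = 0" using K(3) by simp
      then have "ordr e dvd c 0" using nm_eq_0_iff by blast
      moreover have "c 0 < ordr e" using cq ea by (auto simp: Q_def)
      ultimately have cz: "c 0 = 0" using dvd_imp_le not_le by blast
      have "s = 0" using \<open>nm (c 0) e + s = 0\<close> c0 by simp
      moreover have "\<forall>j<r. (c \<circ> Suc) j < q' j" using cq by (auto simp: Q_def)
      moreover have "\<forall>c. (\<forall>j<r. c j < q' j) \<longrightarrow> (\<Sum>j<r. nm (c j) (e' j)) = 0 \<longrightarrow> (\<forall>j<r. c j = 0)"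
        using IH unfolding basis_of_def by blast
      ultimately have "\<forall>j<r. (c \<circ> Suc) j = 0" unfolding s_def
        by (metis (mono_tags, lifting) comp_apply sum.cong)
      then have "\<forall>j<r. c (Suc j) = 0" by simp
      then show "c j = 0" using cz j by (cases j) auto
    qed
    have "basis_of p H (Suc r) E Q" unfolding basis_of_def using P1 P2 P3 by blast
    then show ?thesis by blast
  qed
qed




abbreviation X :: "'a::ab_group_add \<Rightarrow> 'a \<Rightarrow>\<^sub>0 int" where "X g \<equiv> Poly_Mapping.single g 1"

lemma X_add: "X (g + h) = X g * X h" by (simp add: mult_single)

lemma X_nm: "X (nm n g) = X g ^ n"
  by (induction n) (auto simp: X_add)

lemma frob1:
  assumes p: "prime p"
  shows "(of_nat p :: 'r::comm_ring_1) dvd ((1 - y) ^ p - (1 - y ^ p))"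
proof -
  have p2: "p \<ge> 2" using p prime_ge_2_nat by blast
  define f where "f k = (of_nat (p choose k) :: 'r) * (-y) ^ k" for k
  have bin: "(1 - y) ^ p = (\<Sum>k\<le>p. f k)"
    using binomial_ring[of "-y" 1 p] by (simp add: f_def)
  obtain m where pm: "p = Suc m" using p2 by (cases p) auto
  have "(\<Sum>k\<le>p. f k) = (\<Sum>k\<le>m. f k) + f p" unfolding pm by (rule sum.atMost_Suc)
  also have "(\<Sum>k\<le>m. f k) = f 0 + (\<Sum>i<m. f (Suc i))" by (rule sum.atMost_shift)
  also have "f 0 = 1" by (simp add: f_def)
  also have "f p = (-y) ^ p" by (simp add: f_def)
  finally have eq: "(1 - y) ^ p = 1 + ((-y) ^ p + (\<Sum>i<m. f (Suc i)))" using bin by (simp add: algebra_simps)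
  have mid: "(of_nat p :: 'r) dvd (\<Sum>i<m. f (Suc i))"
  proof (rule dvd_sum)
    fix i assume "i \<in> {..<m}"
    then have "Suc i < p" "Suc i \<noteq> 0" using pm by auto
    then have "p dvd (p choose (Suc i))" using p p2 by (intro dvd_choose_prime) auto
    then obtain t where "p choose (Suc i) = p * t" by auto
    then have "(of_nat p :: 'r) dvd of_nat (p choose (Suc i))" by simp
    then show "(of_nat p :: 'r) dvd f (Suc i)" unfolding f_def by (rule dvd_mult2)
  qed
  have ends: "(of_nat p :: 'r) dvd ((-y) ^ p + y ^ p)"
  proof (cases "odd p")
    case True
    then show ?thesis by (simp add: power_minus_odd)
  next
    case False
    have "\<not> p > 2" using prime_odd_nat[OF p] False by blast
    then have "p = 2" using p2 by simp
    moreover have "(-y) ^ 2 + y ^ 2 = of_nat 2 * y ^ 2" by (simp add: power2_eq_square)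
    ultimately show ?thesis by simp
  qed
  have eqn: "(1 - y) ^ p - (1 - y ^ p) = ((-y) ^ p + y ^ p) + (\<Sum>i<m. f (Suc i))"
    using eq by (simp add: algebra_simps)
  show ?thesis unfolding eqn by (rule dvd_add[OF ends mid])
qed

lemma dvd_pow_diff:
  fixes u v :: "'r::comm_ring_1"
  assumes "d dvd (u - v)" shows "d dvd (u ^ n - v ^ n)"
  using assms by (simp add: power_diff_sumr2)

lemma frob:
  assumes p: "prime p"
  shows "(of_nat p :: 'r::comm_ring_1) dvd ((1 - y) ^ (p ^ a) - (1 - y ^ (p ^ a)))"
proof (induction a)
  case 0
  then show ?case by simp
next
  case (Suc a)
  define u where "u = (1 - y) ^ (p ^ a)"
  define v where "v = 1 - y ^ (p ^ a)"
  have "(of_nat p :: 'r) dvd (u ^ p - v ^ p)"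
    using Suc by (intro dvd_pow_diff) (simp add: u_def v_def)
  moreover have "(of_nat p :: 'r) dvd (v ^ p - (1 - (y ^ (p ^ a)) ^ p))"
    unfolding v_def by (rule frob1[OF p])
  ultimately have "(of_nat p :: 'r) dvd ((u ^ p - v ^ p) + (v ^ p - (1 - (y ^ (p ^ a)) ^ p)))"
    by (rule dvd_add)
  have e1: "(1 - y) ^ (p ^ Suc a) = u ^ p" by (simp only: u_def power_Suc2 power_mult)
  have e2: "y ^ (p ^ Suc a) = (y ^ (p ^ a)) ^ p" by (simp only: power_Suc2 power_mult)
  have eq: "(u ^ p - v ^ p) + (v ^ p - (1 - (y ^ (p ^ a)) ^ p)) = u ^ p - (1 - (y ^ (p ^ a)) ^ p)"
    by simp
  show ?case unfolding e1 e2 eq[symmetric] by fact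
qed

lemma ideal_lemma:
  fixes e :: "nat \<Rightarrow> 'a::ab_group_add"
  assumes gen: "g = (\<Sum>j<r. nm (c j) (e j))"
  shows "\<exists>u. 1 - X g = (\<Sum>j<r. (1 - X (e j)) * u j)"
proof -
  define inI where "inI z \<longleftrightarrow> (\<exists>u. z = (\<Sum>j<r. (1 - X (e j)) * u j))" for z
  have add: "inI (z + w)" if a1: "inI z" and a2: "inI w" for z w
  proof -
    obtain u where u: "z = (\<Sum>j<r. (1 - X (e j)) * u j)" using a1 unfolding inI_def by blast
    obtain v where v: "w = (\<Sum>j<r. (1 - X (e j)) * v j)" using a2 unfolding inI_def by blast
    note u v
    then have "z + w = (\<Sum>j<r. (1 - X (e j)) * (u j + v j))"
      by (simp add: sum.distrib distrib_left)
    then show ?thesis unfolding inI_def by (intro exI[where x="\<lambda>j. u j + v j"]) simp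
  qed
  have mul: "inI (w * z)" if a1: "inI z" for z w
  proof -
    obtain u where "z = (\<Sum>j<r. (1 - X (e j)) * u j)" using a1 unfolding inI_def by blast
    then have "w * z = (\<Sum>j<r. (1 - X (e j)) * (w * u j))"
      by (simp add: sum_distrib_left mult.left_commute)
    then show ?thesis unfolding inI_def by (intro exI[where x="\<lambda>j. w * u j"]) simp
  qed
  have gen1: "inI (1 - X (e j))" if "j < r" for j
  proof -
    have "(\<Sum>l<r. (1 - X (e l)) * (if l = j then 1 else 0)) = (\<Sum>l<r. if l = j then 1 - X (e l) else 0)"
      by (rule sum.cong) auto
    also have "\<dots> = 1 - X (e j)" using that by (simp add: sum.delta)
    finally show ?thesis unfolding inI_def by (intro exI[where x="\<lambda>l. if l = j then 1 else 0"]) simp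
  qed
  have zero: "inI 0" unfolding inI_def by (intro exI[where x="\<lambda>_. 0"]) simp
  have pw: "inI (1 - X (nm n (e j)))" if "j < r" for j n
  proof (induction n)
    case 0
    show ?case using zero by simp
  next
    case (Suc n)
    have eq: "1 - X (nm (Suc n) (e j)) = (1 - X (e j)) + X (e j) * (1 - X (nm n (e j)))"
      by (simp add: X_add algebra_simps)
    show ?case unfolding eq by (rule add[OF gen1[OF that] mul[OF Suc]])
  qed
  have "inI (1 - X (\<Sum>j<n. nm (c j) (e j)))" if "n \<le> r" for n
    using that
  proof (induction n)
    case 0
    show ?case using zero by simp
  next
    case (Suc n)
    have eq: "1 - X (\<Sum>j<Suc n. nm (c j) (e j)) =
          (1 - X (nm (c n) (e n))) + X (nm (c n) (e n)) * (1 - X (\<Sum>j<n. nm (c j) (e j)))"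
      by (simp add: X_add algebra_simps)
    have i1: "inI (1 - X (nm (c n) (e n)))" using pw Suc.prems by simp
    have i2: "inI (1 - X (\<Sum>j<n. nm (c j) (e j)))" using Suc by simp
    show ?case unfolding eq by (rule add[OF i1 mul[OF i2]])
  qed
  then show ?thesis using gen unfolding inI_def by blast
qed




lemma lookup_ofnat_mult: "Poly_Mapping.lookup (of_nat n * c) h = int n * Poly_Mapping.lookup c h"
  by (induction n) (auto simp: distrib_right Poly_Mapping.lookup_add Poly_Mapping.lookup_zero)

lemma lookup_pdvd:
  assumes "(of_nat p :: 'a::ab_group_add \<Rightarrow>\<^sub>0 int) dvd z"
  shows "int p dvd Poly_Mapping.lookup z h"
proof -
  obtain c where "z = of_nat p * c" using assms by blast
  then show ?thesis by (simp add: lookup_ofnat_mult)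
qed

lemma prod_neg_X:
  fixes g :: "'b \<Rightarrow> 'a::ab_group_add"
  shows "finite J \<Longrightarrow> (\<Prod>i\<in>J. - X (g i)) = Poly_Mapping.single (sum g J) ((-1) ^ card J)"
proof (induction J rule: finite_induct)
  case empty
  then show ?case by simp
next
  case (insert x F)
  have "(\<Prod>i\<in>insert x F. - X (g i)) = - X (g x) * Poly_Mapping.single (sum g F) ((-1) ^ card F)"
    using insert by simp
  also have "\<dots> = - Poly_Mapping.single (g x + sum g F) ((-1) ^ card F)"
    by (simp add: mult_single)
  also have "\<dots> = Poly_Mapping.single (g x + sum g F) ((-1) ^ Suc (card F))"
    by (simp add: single_uminus[symmetric])
  finally show ?case using insert by simp
qed

lemma prod_expand:
  fixes g :: "'b \<Rightarrow> 'a::ab_group_add"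
  assumes fin: "finite I"
  shows "(\<Prod>i\<in>I. (1 - X (g i))) = (\<Sum>J\<in>Pow I. Poly_Mapping.single (sum g J) ((-1) ^ card J))"
proof -
  have "(\<Prod>i\<in>I. (1 - X (g i))) = (\<Prod>i\<in>I. (- X (g i)) + 1)" by simp
  also have "\<dots> = (\<Sum>J\<in>Pow I. (\<Prod>i\<in>J. - X (g i)) * (\<Prod>i\<in>I - J. 1))"
    by (rule prod_add[OF fin])
  also have "\<dots> = (\<Sum>J\<in>Pow I. Poly_Mapping.single (sum g J) ((-1) ^ card J))"
  proof (rule sum.cong)
    fix J assume "J \<in> Pow I"
    then have "finite J" using fin finite_subset by auto
    then show "(\<Prod>i\<in>J. - X (g i)) * (\<Prod>i\<in>I - J. 1) = Poly_Mapping.single (sum g J) ((-1) ^ card J)"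
      using prod_neg_X by simp
  qed simp
  finally show ?thesis .
qed

lemma coeff_expand:
  fixes g :: "'b \<Rightarrow> 'a::ab_group_add"
  assumes fin: "finite I"
  shows "Poly_Mapping.lookup (\<Prod>i\<in>I. (1 - X (g i))) h = (\<Sum>J\<in>{J\<in>Pow I. sum g J = h}. (-1) ^ card J)"
proof -
  have "Poly_Mapping.lookup (\<Prod>i\<in>I. (1 - X (g i))) h = (\<Sum>J\<in>Pow I. ((-1) ^ card J when sum g J = h))"
    unfolding prod_expand[OF fin] by (simp add: Poly_Mapping.lookup_sum Poly_Mapping.lookup_single)
  also have "\<dots> = (\<Sum>J\<in>Pow I. if sum g J = h then (-1) ^ card J else 0)"
    by (simp add: when_def)
  also have "\<dots> = (\<Sum>J\<in>{J\<in>Pow I. sum g J = h}. (-1) ^ card J)"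
    by (rule sum.inter_filter[symmetric]) (use fin in simp)
  finally show ?thesis .
qed

lemma pigeon:
  fixes f :: "'b \<Rightarrow> nat"
  assumes fin: "finite I" and f: "\<forall>i\<in>I. f i < r"
    and big: "card I \<ge> 1 + (\<Sum>j<r. q j - 1)"
  shows "\<exists>j<r. q j \<le> card {i\<in>I. f i = j}"
proof (rule ccontr)
  assume "\<not> ?thesis"
  then have lt: "\<forall>j<r. card {i\<in>I. f i = j} \<le> q j - 1" by auto
  have "I = (\<Union>j\<in>{..<r}. {i\<in>I. f i = j})" using f by auto
  moreover have "card (\<Union>j\<in>{..<r}. {i\<in>I. f i = j}) = (\<Sum>j<r. card {i\<in>I. f i = j})"
    by (rule card_UN_disjoint) (use fin in auto)
  ultimately have "card I = (\<Sum>j<r. card {i\<in>I. f i = j})" by simp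
  also have "\<dots> \<le> (\<Sum>j<r. q j - 1)" by (rule sum_mono) (use lt in auto)
  finally show False using big by simp
qed




lemma olson_prod:
  fixes g :: "'b \<Rightarrow> 'a::{finite,ab_group_add}"
  assumes p: "prime p" and B: "basis_of p (UNIV::'a set) r e q" and fin: "finite I"
    and big: "card I \<ge> 1 + (\<Sum>j<r. q j - 1)"
  shows "(of_nat p :: 'a \<Rightarrow>\<^sub>0 int) dvd (\<Prod>i\<in>I. (1 - X (g i)))"
proof -
  have gen: "\<forall>h\<in>UNIV. \<exists>c. h = (\<Sum>j<r. nm (c j) (e j))" using B unfolding basis_of_def by blast
  have "\<forall>i. \<exists>u. 1 - X (g i) = (\<Sum>j<r. (1 - X (e j)) * u j)"
  proof
    fix i
    obtain c where "g i = (\<Sum>j<r. nm (c j) (e j))" using gen by blast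
    then show "\<exists>u. 1 - X (g i) = (\<Sum>j<r. (1 - X (e j)) * u j)" by (rule ideal_lemma)
  qed
  from choice[OF this] obtain U where U: "\<forall>i. 1 - X (g i) = (\<Sum>j<r. (1 - X (e j)) * U i j)"
    by blast
  have Apow: "(of_nat p :: 'a \<Rightarrow>\<^sub>0 int) dvd (1 - X (e j)) ^ (q j)" if jr: "j < r" for j
  proof -
    have "\<forall>j<r. e j \<in> UNIV \<and> (\<exists>a. q j = p ^ a) \<and> nm (q j) (e j) = 0"
      using B unfolding basis_of_def by blast
    then obtain a where qa: "q j = p ^ a" and z: "nm (q j) (e j) = 0" using jr by blast
    have X1: "X (e j) ^ (q j) = 1" using z X_nm[of "q j" "e j"] by simp
    have "(of_nat p :: 'a \<Rightarrow>\<^sub>0 int) dvd ((1 - X (e j)) ^ (p ^ a) - (1 - X (e j) ^ (p ^ a)))"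
      by (rule frob[OF p])
    then show ?thesis using X1 qa by simp
  qed
  have "(\<Prod>i\<in>I. (1 - X (g i))) = (\<Prod>i\<in>I. \<Sum>j\<in>{..<r}. (1 - X (e j)) * U i j)"
    using U by simp
  also have "\<dots> = (\<Sum>f\<in>PiE I (\<lambda>_. {..<r}). \<Prod>i\<in>I. (1 - X (e (f i))) * U i (f i))"
    by (rule prod_sum_PiE) (use fin in auto)
  finally have eq: "(\<Prod>i\<in>I. (1 - X (g i))) = (\<Sum>f\<in>PiE I (\<lambda>_. {..<r}). \<Prod>i\<in>I. (1 - X (e (f i))) * U i (f i))" .
  show ?thesis unfolding eq
  proof (rule dvd_sum)
    fix f assume f: "f \<in> PiE I (\<lambda>_. {..<r})"
    then have "\<forall>i\<in>I. f i < r" by auto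
    then obtain j where j: "j < r" "q j \<le> card {i\<in>I. f i = j}" using pigeon[OF fin _ big] by blast
    define Ij where "Ij = {i\<in>I. f i = j}"
    define P where "P = 1 - X (e j)"
    have s1: "(\<Prod>i\<in>I. (1 - X (e (f i))) * U i (f i)) = (\<Prod>i\<in>I. (1 - X (e (f i)))) * (\<Prod>i\<in>I. U i (f i))"
      by (rule prod.distrib)
    have s2: "(\<Prod>i\<in>I. (1 - X (e (f i)))) = (\<Prod>i\<in>I - Ij. (1 - X (e (f i)))) * (\<Prod>i\<in>Ij. (1 - X (e (f i))))"
      by (rule prod.subset_diff) (auto simp: Ij_def fin)
    have s3: "(\<Prod>i\<in>Ij. (1 - X (e (f i)))) = (\<Prod>i\<in>Ij. P)"
      by (rule prod.cong) (auto simp: Ij_def P_def)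
    have s4: "(\<Prod>i\<in>Ij. P) = P ^ card Ij" by simp
    have s5: "P ^ card Ij = P ^ q j * P ^ (card Ij - q j)"
      using j(2) unfolding Ij_def by (simp add: power_add[symmetric])
    have "(of_nat p :: 'a \<Rightarrow>\<^sub>0 int) dvd P ^ q j" unfolding P_def by (rule Apow[OF j(1)])
    then have "(of_nat p :: 'a \<Rightarrow>\<^sub>0 int) dvd
       (\<Prod>i\<in>I - Ij. (1 - X (e (f i)))) * (P ^ q j * P ^ (card Ij - q j)) * (\<Prod>i\<in>I. U i (f i))"
      by (intro dvd_mult dvd_mult2)
    then show "(of_nat p :: 'a \<Rightarrow>\<^sub>0 int) dvd (\<Prod>i\<in>I. (1 - X (e (f i))) * U i (f i))"
      unfolding s1 s2 s3 s4 s5 .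
  qed
qed

lemma olson_coeff:
  fixes g :: "'b \<Rightarrow> 'a::{finite,ab_group_add}"
  assumes p: "prime p" and B: "basis_of p (UNIV::'a set) r e q" and fin: "finite I"
    and big: "card I \<ge> 1 + (\<Sum>j<r. q j - 1)"
  shows "int p dvd (\<Sum>J\<in>{J\<in>Pow I. sum g J = h}. (-1::int) ^ card J)"
  using lookup_pdvd[OF olson_prod[OF p B fin big, of g], of h] coeff_expand[OF fin, of g h] by simp




lemma sub_image:
  "finite I \<Longrightarrow> T \<subseteq># image_mset f (mset_set I) \<Longrightarrow> \<exists>J\<subseteq>I. T = image_mset f (mset_set J)"
proof (induction I arbitrary: T rule: finite_induct)
  case empty
  then show ?case by simp
next
  case (insert x F)
  have im: "image_mset f (mset_set (insert x F)) = add_mset (f x) (image_mset f (mset_set F))"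
    using insert.hyps by simp
  show ?case
  proof (cases "f x \<in># T")
    case True
    define T' where "T' = T - {#f x#}"
    have TT: "T = add_mset (f x) T'" unfolding T'_def using True by simp
    have "T' \<subseteq># image_mset f (mset_set F)" using insert.prems unfolding im TT by simp
    then obtain J where J: "J \<subseteq> F" "T' = image_mset f (mset_set J)" using insert.IH by blast
    have "x \<notin> J" using J insert.hyps by auto
    moreover have "finite J" using J insert.hyps finite_subset by auto
    ultimately have "T = image_mset f (mset_set (insert x J))" using TT J by simp
    moreover have "insert x J \<subseteq> insert x F" using J by auto
    ultimately show ?thesis by blast
  next
    case False
    have "T \<subseteq># image_mset f (mset_set F)"
      unfolding subseteq_mset_def
    proof
      fix b
      have le: "count T b \<le> count (add_mset (f x) (image_mset f (mset_set F))) b"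
        using insert.prems unfolding im subseteq_mset_def by blast
      show "count T b \<le> count (image_mset f (mset_set F)) b"
      proof (cases "b = f x")
        case True
        then have "count T b = 0" using False by (simp add: count_eq_zero_iff)
        then show ?thesis by simp
      next
        case False
        then show ?thesis using le by simp
      qed
    qed
    then obtain J where "J \<subseteq> F" "T = image_mset f (mset_set J)" using insert.IH by blast
    then show ?thesis by blast
  qed
qed

lemma index_mset: "\<exists>s. S = image_mset s (mset_set {..<size S})"
proof -
  obtain xs where xs: "mset xs = S" using ex_mset by blast
  have "S = mset (map (nth xs) [0..<length xs])" using xs by (simp add: map_nth)
  also have "\<dots> = image_mset (nth xs) (mset_set {..<length xs})"
    by (simp add: atLeast0LessThan)
  finally show ?thesis using xs by auto
qed

lemma sub_of_index:
  fixes n :: nat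
  assumes "J \<subseteq> {..<n}"
  shows "image_mset s (mset_set J) \<subseteq># image_mset s (mset_set {..<n})"
  by (rule image_mset_subseteq_mono, rule subset_imp_msubset_mset_set) (use assms in auto)

lemma sum_index: "finite J \<Longrightarrow> sum_mset (image_mset s (mset_set J)) = sum s J"
  by (simp add: sum_unfold_sum_mset)

lemma has_zs_big:
  fixes S :: "'a::{finite,ab_group_add} multiset"
  assumes p: "prime p" and B: "basis_of p (UNIV::'a set) r e q"
    and big: "size S \<ge> 1 + (\<Sum>j<r. q j - 1)"
  shows "has_nonempty_zero_sum_subseq S"
proof (rule ccontr)
  assume nz: "\<not> has_nonempty_zero_sum_subseq S"
  obtain s where sS: "S = image_mset s (mset_set {..<size S})" using index_mset by blast
  define I where "I = {..<size S}"
  have fin: "finite I" by (simp add: I_def)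
  have "card I \<ge> 1 + (\<Sum>j<r. q j - 1)" using big by (simp add: I_def)
  then have d: "int p dvd (\<Sum>J\<in>{J\<in>Pow I. sum s J = 0}. (-1::int) ^ card J)"
    by (rule olson_coeff[OF p B fin])
  have "{J\<in>Pow I. sum s J = 0} = {{}}"
  proof (intro equalityI subsetI)
    fix J assume J: "J \<in> {J\<in>Pow I. sum s J = 0}"
    show "J \<in> {{}}"
    proof (rule ccontr)
      assume "J \<notin> {{}}"
      then have Jne: "J \<noteq> {}" by simp
      have JI: "J \<subseteq> I" and J0: "sum s J = 0" using J by auto
      have finJ: "finite J" using JI fin finite_subset by auto
      have "image_mset s (mset_set J) \<subseteq># S"
        using sub_of_index[of J "size S" s] JI sS unfolding I_def by simp
      moreover have "image_mset s (mset_set J) \<noteq> {#}" using Jne finJ by (simp add: mset_set_empty_iff)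
      moreover have "sum_mset (image_mset s (mset_set J)) = 0" using sum_index[OF finJ, of s] J0 by simp
      ultimately show False using nz unfolding has_nonempty_zero_sum_subseq_def by blast
    qed
  next
    fix J :: "nat set" assume "J \<in> {{}}"
    then show "J \<in> {J\<in>Pow I. sum s J = 0}" by simp
  qed
  then have "int p dvd 1" using d by simp
  then show False using p by (simp add: prime_gt_1_nat)
qed

lemma zsfree_exists:
  fixes e :: "nat \<Rightarrow> 'a::{finite,ab_group_add}"
  assumes B: "basis_of p (UNIV::'a set) r e q" and p: "prime p"
  shows "\<exists>S0::'a multiset. size S0 = (\<Sum>j<r. q j - 1) \<and> \<not> has_nonempty_zero_sum_subseq S0"
proof -
  define Sg where "Sg = (SIGMA j:{..<r}. {..<q j - 1})"
  define f where "f x = e (fst x)" for x :: "nat \<times> nat"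
  define S0 where "S0 = image_mset f (mset_set Sg)"
  have finSg: "finite Sg" unfolding Sg_def by auto
  have "size S0 = card Sg" unfolding S0_def by simp
  also have "\<dots> = (\<Sum>j<r. q j - 1)" unfolding Sg_def by (subst card_SigmaI) auto
  finally have sz: "size S0 = (\<Sum>j<r. q j - 1)" .
  have indep: "\<forall>c. (\<forall>j<r. c j < q j) \<longrightarrow> (\<Sum>j<r. nm (c j) (e j)) = 0 \<longrightarrow> (\<forall>j<r. c j = 0)"
    using B unfolding basis_of_def by blast
  have qpos: "q j > 0" if "j < r" for j
  proof -
    have "\<exists>a. q j = p ^ a" using B that unfolding basis_of_def by blast
    then show ?thesis using p prime_gt_0_nat by auto
  qed
  have "\<not> has_nonempty_zero_sum_subseq S0"
  proof
    assume "has_nonempty_zero_sum_subseq S0"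
    then obtain T where T: "T \<subseteq># S0" "T \<noteq> {#}" "sum_mset T = 0"
      unfolding has_nonempty_zero_sum_subseq_def by blast
    obtain J where J: "J \<subseteq> Sg" "T = image_mset f (mset_set J)"
      using sub_image[OF finSg] T(1) unfolding S0_def by blast
    have finJ: "finite J" using J finSg finite_subset by auto
    define Jj where "Jj j = {c. (j, c) \<in> J}" for j
    have JS: "J = (SIGMA j:{..<r}. Jj j)" using J(1) unfolding Jj_def Sg_def by auto
    have finJj: "finite (Jj j)" if "j < r" for j
    proof -
      have "Jj j \<subseteq> {..<q j - 1}" using J(1) unfolding Jj_def Sg_def by auto
      then show ?thesis using finite_subset by blast
    qed
    have "(\<Sum>j<r. \<Sum>c\<in>Jj j. f (j, c)) = (\<Sum>(j, c)\<in>Sigma {..<r} Jj. f (j, c))"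
      by (rule sum.Sigma) (use finJj in auto)
    moreover have "(\<Sum>(j, c)\<in>Sigma {..<r} Jj. f (j, c)) = sum f (Sigma {..<r} Jj)"
      by (rule sum.cong) auto
    ultimately have "sum f J = (\<Sum>j<r. \<Sum>c\<in>Jj j. f (j, c))"
      using JS by simp
    also have "\<dots> = (\<Sum>j<r. nm (card (Jj j)) (e j))"
      by (rule sum.cong) (simp_all add: f_def sum_const_nm finJj)
    finally have s0: "(\<Sum>j<r. nm (card (Jj j)) (e j)) = 0"
      using T(3) J(2) sum_index[OF finJ, of f] by simp
    have "\<forall>j<r. card (Jj j) < q j"
    proof (intro allI impI)
      fix j assume j: "j < r"
      have "Jj j \<subseteq> {..<q j - 1}" using J(1) unfolding Jj_def Sg_def by auto
      then have "card (Jj j) \<le> q j - 1" using card_mono[of "{..<q j - 1}"] by fastforce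
      then show "card (Jj j) < q j" using qpos[OF j] by linarith
    qed
    then have "\<forall>j<r. card (Jj j) = 0" using indep[rule_format, of "\<lambda>j. card (Jj j)"] s0 by blast
    then have "\<forall>j<r. Jj j = {}" using finJj by auto
    then have "J = {}" unfolding JS by auto
    then show False using T(2) J(2) by simp
  qed
  then show ?thesis using sz by blast
qed

lemma davenport_eq:
  fixes e :: "nat \<Rightarrow> 'a::{finite,ab_group_add}"
  assumes B: "basis_of p (UNIV::'a set) r e q" and p: "prime p"
  shows "davenport TYPE('a) = 1 + (\<Sum>j<r. q j - 1)"
  unfolding davenport_def
proof (rule Least_equality)
  show "0 < 1 + (\<Sum>j<r. q j - 1) \<and>
    (\<forall>S::'a multiset. 1 + (\<Sum>j<r. q j - 1) \<le> size S \<longrightarrow> has_nonempty_zero_sum_subseq S)"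
    using has_zs_big[OF p B] by auto
next
  fix y assume y: "0 < y \<and> (\<forall>S::'a multiset. y \<le> size S \<longrightarrow> has_nonempty_zero_sum_subseq S)"
  obtain S0 :: "'a multiset" where "size S0 = (\<Sum>j<r. q j - 1)" "\<not> has_nonempty_zero_sum_subseq S0"
    using zsfree_exists[OF B p] by blast
  note S0 = this
  show "1 + (\<Sum>j<r. q j - 1) \<le> y"
  proof (rule ccontr)
    assume "\<not> 1 + (\<Sum>j<r. q j - 1) \<le> y"
    then have "y \<le> size S0" using S0(1) by simp
    then show False using y S0(2) by blast
  qed
qed




lemma binom_shift:
  "int k * int (k choose m) = int (Suc m) * int (k choose Suc m) + int m * int (k choose m)"
proof (cases "m \<le> k")
  case True
  have "(k - m) * (k choose m) = Suc m * (k choose Suc m)"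
    by (simp only: binomial_absorption binomial_absorb_comp)
  then have "int (k - m) * int (k choose m) = int (Suc m) * int (k choose Suc m)"
    by (metis of_nat_mult)
  moreover have "int (k - m) = int k - int m" using True by simp
  ultimately show ?thesis by (simp add: algebra_simps)
next
  case False
  then show ?thesis by (simp add: binomial_eq_0)
qed

lemma binom_expand:
  "finite A \<Longrightarrow> \<exists>c. \<forall>k. (\<Prod>b\<in>A. (int k - int b)) = (\<Sum>m\<le>card A. c m * int (k choose m))"
proof (induction A rule: finite_induct)
  case empty
  show ?case by (intro exI[of _ "\<lambda>_. 1"]) simp
next
  case (insert b A)
  define d where "d = card A"
  obtain c where c: "\<forall>k. (\<Prod>b\<in>A. (int k - int b)) = (\<Sum>m\<le>d. c m * int (k choose m))"
    using insert.IH unfolding d_def by blast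
  define c' where "c' m = (if m = 0 then 0 else c (m - 1) * int m) + (if m \<le> d then c m * (int m - int b) else 0)" for m
  have cd: "card (insert b A) = Suc d" using insert.hyps by (simp add: d_def)
  have "(\<Prod>b\<in>insert b A. (int k - int b)) = (\<Sum>m\<le>Suc d. c' m * int (k choose m))" for k
  proof -
    define h1 where "h1 m = (if m = 0 then 0 else c (m - 1) * int m) * int (k choose m)" for m
    define h2 where "h2 m = (if m \<le> d then c m * (int m - int b) else 0) * int (k choose m)" for m
    have "(\<Prod>b\<in>insert b A. (int k - int b)) = (int k - int b) * (\<Sum>m\<le>d. c m * int (k choose m))"
      using insert.hyps c by simp
    also have "\<dots> = (\<Sum>m\<le>d. c m * (int k * int (k choose m)) - c m * int b * int (k choose m))"
      by (simp add: sum_distrib_left algebra_simps)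
    also have "\<dots> = (\<Sum>m\<le>d. h1 (Suc m) + h2 m)"
      by (rule sum.cong) (simp_all add: h1_def h2_def binom_shift algebra_simps)
    also have "\<dots> = (\<Sum>m\<le>d. h1 (Suc m)) + (\<Sum>m\<le>d. h2 m)" by (rule sum.distrib)
    also have "(\<Sum>m\<le>d. h1 (Suc m)) = (\<Sum>m\<le>Suc d. h1 m)"
      by (subst sum.atMost_Suc_shift) (simp add: h1_def)
    also have "(\<Sum>m\<le>d. h2 m) = (\<Sum>m\<le>Suc d. h2 m)"
      by (subst sum.atMost_Suc) (simp add: h2_def)
    also have "(\<Sum>m\<le>Suc d. h1 m) + (\<Sum>m\<le>Suc d. h2 m) = (\<Sum>m\<le>Suc d. c' m * int (k choose m))"
      unfolding sum.distrib[symmetric] by (rule sum.cong) (simp_all add: h1_def h2_def c'_def algebra_simps)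
    finally show ?thesis .
  qed
  then show ?case unfolding cd by blast
qed

lemma claim1:
  fixes s :: "nat \<Rightarrow> 'a::{finite,ab_group_add}"
  assumes p: "prime p" and B: "basis_of p (UNIV::'a set) r e q" and fin: "finite I"
    and big: "card I \<ge> 1 + (\<Sum>j<r. q j - 1) + m"
  shows "int p dvd (\<Sum>J\<in>{J\<in>Pow I. sum s J = 0}. (-1) ^ card J * int (card J choose m))"
proof -
  define Z where "Z = {J\<in>Pow I. sum s J = 0}"
  define Um where "Um = {U. U \<subseteq> I \<and> card U = m}"
  have finZ: "finite Z" unfolding Z_def using fin by simp
  have finUm: "finite Um" unfolding Um_def using fin by simp
  have step1: "(-1) ^ card J * int (card J choose m) = (\<Sum>U\<in>{U\<in>Um. U \<subseteq> J}. (-1) ^ card J)"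
    if "J \<in> Z" for J
  proof -
    have JI: "J \<subseteq> I" using that unfolding Z_def by simp
    then have finJ: "finite J" using fin finite_subset by auto
    have "{U\<in>Um. U \<subseteq> J} = {U. U \<subseteq> J \<and> card U = m}" using JI unfolding Um_def by auto
    then have "card {U\<in>Um. U \<subseteq> J} = card J choose m" using n_subsets[OF finJ] by simp
    then show ?thesis by simp
  qed
  have "(\<Sum>J\<in>Z. (-1) ^ card J * int (card J choose m)) = (\<Sum>J\<in>Z. \<Sum>U\<in>{U\<in>Um. U \<subseteq> J}. (-1) ^ card J)"
    by (rule sum.cong) (simp_all add: step1)
  also have "\<dots> = (\<Sum>U\<in>Um. \<Sum>J\<in>{J\<in>Z. U \<subseteq> J}. (-1) ^ card J)"
    by (rule sum.swap_restrict[OF finZ finUm])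
  finally have eq: "(\<Sum>J\<in>Z. (-1) ^ card J * int (card J choose m)) = (\<Sum>U\<in>Um. \<Sum>J\<in>{J\<in>Z. U \<subseteq> J}. (-1::int) ^ card J)" .
  have inner: "int p dvd (\<Sum>J\<in>{J\<in>Z. U \<subseteq> J}. (-1::int) ^ card J)" if U: "U \<in> Um" for U
  proof -
    have UI: "U \<subseteq> I" and cU: "card U = m" using U unfolding Um_def by auto
    have finU: "finite U" using UI fin finite_subset by auto
    define T where "T = {J'\<in>Pow (I - U). sum s J' = - sum s U}"
    have "(\<Sum>J\<in>{J\<in>Z. U \<subseteq> J}. (-1::int) ^ card J) = (\<Sum>J'\<in>T. (-1) ^ m * (-1) ^ card J')"
    proof (rule sum.reindex_bij_witness[of _ "\<lambda>J'. U \<union> J'" "\<lambda>J. J - U"])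
      fix J assume J: "J \<in> {J\<in>Z. U \<subseteq> J}"
      then show "U \<union> (J - U) = J" by auto
      have JI: "J \<subseteq> I" and J0: "sum s J = 0" and UJ: "U \<subseteq> J" using J unfolding Z_def by auto
      have finJ: "finite J" using JI fin finite_subset by auto
      have "sum s J = sum s U + sum s (J - U)"
        using sum.subset_diff[OF UJ finJ, of s] by (simp add: add.commute)
      then have "sum s (J - U) = - sum s U" using J0 by (simp add: eq_neg_iff_add_eq_0 add.commute)
      then show "J - U \<in> T" unfolding T_def using JI by auto
      have "card (J - U) = card J - m" using card_Diff_subset[OF finU UJ] cU by simp
      moreover have "card U \<le> card J" using card_mono[OF finJ UJ] .
      ultimately have "card J = m + card (J - U)" using cU by simp
      then show "(-1) ^ m * (-1) ^ card (J - U) = (-1::int) ^ card J" by (simp add: power_add)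
    next
      fix J' assume J': "J' \<in> T"
      then have J'I: "J' \<subseteq> I - U" and s': "sum s J' = - sum s U" unfolding T_def by auto
      show "U \<union> J' - U = J'" using J'I by auto
      have finJ': "finite J'" using J'I fin finite_subset by auto
      have "sum s (U \<union> J') = sum s U + sum s J'"
        by (rule sum.union_disjoint) (use finU finJ' J'I in auto)
      then have "sum s (U \<union> J') = 0" using s' by simp
      then show "U \<union> J' \<in> {J\<in>Z. U \<subseteq> J}" unfolding Z_def using UI J'I by auto
    qed
    also have "\<dots> = (-1) ^ m * (\<Sum>J'\<in>T. (-1) ^ card J')" by (simp add: sum_distrib_left)
    finally have eq2: "(\<Sum>J\<in>{J\<in>Z. U \<subseteq> J}. (-1::int) ^ card J) = (-1) ^ m * (\<Sum>J'\<in>T. (-1) ^ card J')" .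
    have finIU: "finite (I - U)" using fin by simp
    have "card (I - U) = card I - m" using card_Diff_subset[OF finU UI] cU by simp
    then have "card (I - U) \<ge> 1 + (\<Sum>j<r. q j - 1)" using big by simp
    then have "int p dvd (\<Sum>J'\<in>T. (-1::int) ^ card J')"
      unfolding T_def by (rule olson_coeff[OF p B finIU])
    then show ?thesis unfolding eq2 by (rule dvd_mult)
  qed
  have "int p dvd (\<Sum>U\<in>Um. \<Sum>J\<in>{J\<in>Z. U \<subseteq> J}. (-1::int) ^ card J)"
    by (rule dvd_sum) (rule inner)
  then show ?thesis using eq unfolding Z_def by simp
qed




theorem theorem2p3:
  fixes p :: nat and i :: nat and A :: "nat set"
    and S :: "'a::{finite, ab_group_add} multiset"
  assumes "prime p"
    and "\<exists>k. card (UNIV :: 'a set) = p ^ k"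
    and "size S = davenport TYPE('a) + i - 1"
    and "i \<in> {1..p}"
    and "A \<subseteq> {1..p - 1}" and "card A = i - 1"
  shows "\<exists>T. T \<subseteq># S \<and> T \<noteq> {#} \<and> sum_mset T = 0 \<and>
           (\<forall>b\<in>A. \<not> [size T = b] (mod p))"
proof (rule ccontr)
  assume neg: "\<not> (\<exists>T. T \<subseteq># S \<and> T \<noteq> {#} \<and> sum_mset T = 0 \<and> (\<forall>b\<in>A. \<not> [size T = b] (mod p)))"
  note p = assms(1)
  obtain k where card: "card (UNIV :: 'a set) = p ^ k" using assms(2) by blast
  have "sg (UNIV::'a set)" by (simp add: sg_def)
  then obtain r e q where B: "basis_of p (UNIV::'a set) r e q"
    using structure_thm[OF p card] by blast
  define Dst where "Dst = 1 + (\<Sum>j<r. q j - 1)"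
  have Dv: "davenport TYPE('a) = Dst" using davenport_eq[OF B p] by (simp add: Dst_def)
  have i1: "i \<ge> 1" using assms(4) by simp
  define n where "n = size S"
  have nD: "n = Dst + i - 1" using assms(3) Dv by (simp add: n_def)
  obtain s where sS: "S = image_mset s (mset_set {..<n})" using index_mset unfolding n_def by blast
  define I where "I = {..<n}"
  have fin: "finite I" by (simp add: I_def)
  define Z where "Z = {J\<in>Pow I. sum s J = 0}"
  have finZ: "finite Z" unfolding Z_def using fin by simp
  have finA: "finite A" using assms(5) finite_subset by blast
  have H0: "\<exists>b\<in>A. [card J = b] (mod p)" if JZ: "J \<in> Z" and Jne: "J \<noteq> {}" for J
  proof -
    have JI: "J \<subseteq> I" and J0: "sum s J = 0" using JZ unfolding Z_def by auto
    have finJ: "finite J" using JI fin finite_subset by auto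
    define T where "T = image_mset s (mset_set J)"
    have "T \<subseteq># S" unfolding T_def sS using sub_of_index[of J n s] JI unfolding I_def by simp
    moreover have "T \<noteq> {#}" unfolding T_def using Jne finJ by (simp add: mset_set_empty_iff)
    moreover have "sum_mset T = 0" unfolding T_def using sum_index[OF finJ, of s] J0 by simp
    moreover have sz: "size T = card J" unfolding T_def by simp
    ultimately have "\<exists>b\<in>A. [size T = b] (mod p)" using neg by blast
    then show ?thesis unfolding sz .
  qed
  obtain c where c: "\<forall>k. (\<Prod>b\<in>A. (int k - int b)) = (\<Sum>m\<le>card A. c m * int (k choose m))"
    using binom_expand[OF finA] by blast
  define Q where "Q k = (\<Prod>b\<in>A. (int k - int b))" for k
  have "(\<Sum>J\<in>Z. (-1) ^ card J * Q (card J)) =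
        (\<Sum>J\<in>Z. \<Sum>m\<le>card A. c m * ((-1) ^ card J * int (card J choose m)))"
    by (rule sum.cong) (simp_all add: Q_def c sum_distrib_left algebra_simps)
  also have "\<dots> = (\<Sum>m\<le>card A. \<Sum>J\<in>Z. c m * ((-1) ^ card J * int (card J choose m)))"
    by (rule sum.swap)
  also have "\<dots> = (\<Sum>m\<le>card A. c m * (\<Sum>J\<in>Z. (-1) ^ card J * int (card J choose m)))"
    by (simp add: sum_distrib_left)
  finally have eqW: "(\<Sum>J\<in>Z. (-1) ^ card J * Q (card J)) =
        (\<Sum>m\<le>card A. c m * (\<Sum>J\<in>Z. (-1) ^ card J * int (card J choose m)))" .
  have dW: "int p dvd (\<Sum>J\<in>Z. (-1) ^ card J * Q (card J))"
    unfolding eqW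
  proof (rule dvd_sum)
    fix m assume m: "m \<in> {..card A}"
    have "m \<le> i - 1" using m assms(6) by simp
    then have "n \<ge> Dst + m" using nD i1 by linarith
    moreover have "card I = n" by (simp add: I_def)
    ultimately have "card I \<ge> 1 + (\<Sum>j<r. q j - 1) + m" unfolding Dst_def by simp
    then have "int p dvd (\<Sum>J\<in>{J\<in>Pow I. sum s J = 0}. (-1) ^ card J * int (card J choose m))"
      by (rule claim1[OF p B fin])
    then show "int p dvd c m * (\<Sum>J\<in>Z. (-1) ^ card J * int (card J choose m))"
      unfolding Z_def by (rule dvd_mult)
  qed
  have emp: "{} \<in> Z" unfolding Z_def by simp
  have "(\<Sum>J\<in>Z. (-1) ^ card J * Q (card J)) = (-1) ^ card {} * Q (card {}) + (\<Sum>J\<in>Z - {{}}. (-1) ^ card J * Q (card J))"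
    using sum.remove[OF finZ emp, of "\<lambda>J. (-1) ^ card J * Q (card J)"] by simp
  then have eqR: "(\<Sum>J\<in>Z. (-1) ^ card J * Q (card J)) = Q 0 + (\<Sum>J\<in>Z - {{}}. (-1) ^ card J * Q (card J))"
    by simp
  have dR: "int p dvd (\<Sum>J\<in>Z - {{}}. (-1) ^ card J * Q (card J))"
  proof (rule dvd_sum)
    fix J assume J: "J \<in> Z - {{}}"
    then obtain b where b: "b \<in> A" "[card J = b] (mod p)" using H0 by blast
    have "[int (card J) = int b] (mod int p)" using b(2) by (simp add: cong_int_iff)
    then have "int p dvd (int (card J) - int b)" by (simp add: cong_iff_dvd_diff)
    also have "(int (card J) - int b) dvd Q (card J)" unfolding Q_def
      by (rule dvd_prodI[OF finA b(1)])
    finally show "int p dvd (-1) ^ card J * Q (card J)" by (rule dvd_mult)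
  qed
  have "int p dvd Q 0" using dW dR unfolding eqR by (simp add: dvd_add_left_iff)
  then have dq: "int p dvd (\<Prod>b\<in>A. (int 0 - int b))" unfolding Q_def .
  have pi: "prime (int p)" using p by simp
  have "\<exists>b\<in>A. int p dvd (int 0 - int b)"
    using prime_dvd_prod_iff[OF finA pi, of "\<lambda>b. int 0 - int b"] dq by blast
  then obtain b where b: "b \<in> A" "int p dvd (int 0 - int b)" by blast
  then have "int p dvd int b" by simp
  then have pb: "p dvd b" by (simp only: int_dvd_int_iff)
  have b1: "1 \<le> b" and b2: "b \<le> p - 1" using b(1) assms(5) by auto
  have "p \<le> b" using dvd_imp_le[OF pb] b1 by simp
  then show False using b2 b1 by arith
qed


end
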